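(* Let $I=[a,b]$ be a compact interval, $P,\tilde P:I\to\mathbb{R}^{n\times m}$ continuous with $\mathrm{rank}(P(s))=n$ for all $s\in I$, and $\Omega=c+G\mathbf{B}_p$ with $c\in\mathbb{R}^m$, $G\in\mathbb{R}^{m\times p}$, $\mathrm{rank}(G)=m$. Put $P_d(s)=\tilde P(s)-P(s)$ and assume $\sup_{s\in I}\|P_d(s)c\|\le\inf_{s\in I}\|P(s)G\|_l$. Then $$\Bigl(\int_I\tilde P(s)\,\mathrm{d}s\Bigr)(c+\alpha G\mathbf{B}_p)\subseteq\int_IP(s)\Omega\,\mathrm{d}s$$ for every $\alpha\in[0,\gamma_m]$, where $$\gamma_m=\frac{\inf_{s\in I}\|P(s)G\|_l-\sup_{s\in I}\|P_d(s)c\|}{\inf_{s\in I}\|P(s)G\|_l+\sup_{s\in I}\|P_d(s)G\|}.$$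
   Context: A norm $\|\cdot\|$ is fixed on each $\mathbb{R}^k$, $\mathbf{B}_k$ is its closed unit ball, and matrices carry induced operator norms. For $M\in\mathbb{R}^{n\times m}\setminus\{0\}$, $\|M\|_l=\max\{\mu\in\mathbb{R}:\ \forall y\in\mathrm{col}(M)\ \exists x \text{ with } Mx=y,\ \mu\|x\|\le\|y\|\}$. Set-valued integral: $\int_IF(s)W\,\mathrm{d}s=\bigcup_w\int_IF(s)w(s)\,\mathrm{d}s$, the union over all Lebesgue measurable $w:I\to W$. *)

theory Defs
  imports "HOL-Analysis.Analysis"
begin

text \<open>An arbitrary norm on a real vector space (the paper fixes an arbitrary norm on each R^k).\<close>
definition is_norm :: "('a::real_vector \<Rightarrow> real) \<Rightarrow> bool" where
  "is_norm N \<longleftrightarrow> (\<forall>x. 0 \<le> N x) \<and> (\<forall>x. N x = 0 \<longleftrightarrow> x = 0)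
     \<and> (\<forall>r x. N (r *\<^sub>R x) = \<bar>r\<bar> * N x) \<and> (\<forall>x y. N (x + y) \<le> N x + N y)"

definition unit_ball :: "('a \<Rightarrow> real) \<Rightarrow> 'a set" where
  "unit_ball N = {x. N x \<le> 1}"

definition op_norm :: "(real^'n \<Rightarrow> real) \<Rightarrow> (real^'m \<Rightarrow> real) \<Rightarrow> real^'n^'m \<Rightarrow> real" where
  "op_norm Nx Ny M = Sup {Ny (M *v x) | x. Nx x \<le> 1}"

definition lower_norm :: "(real^'n \<Rightarrow> real) \<Rightarrow> (real^'m \<Rightarrow> real) \<Rightarrow> real^'n^'m \<Rightarrow> real" where
  "lower_norm Nx Ny M = Sup {\<mu>. \<forall>y \<in> range (\<lambda>x. M *v x). \<exists>x. M *v x = y \<and> \<mu> * Nx x \<le> Ny y}"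

definition set_integral_mat :: "real set \<Rightarrow> (real \<Rightarrow> real^'m^'n) \<Rightarrow> (real^'m) set \<Rightarrow> (real^'n) set" where
  "set_integral_mat I F W =
     {integral I (\<lambda>s. F s *v w s) | w. w \<in> borel_measurable (lebesgue_on I) \<and> (\<forall>s\<in>I. w s \<in> W)}"

end

theory Submission
  imports Defs
begin


lemma isnD:
  assumes "is_norm N"
  shows isn_nonneg: "0 \<le> N x" and isn_zero: "N x = 0 \<longleftrightarrow> x = 0"
    and isn_scale: "N (r *\<^sub>R x) = \<bar>r\<bar> * N x" and isn_tri: "N (x + y) \<le> N x + N y"
  using assms unfolding is_norm_def by auto

lemma isn_0: "is_norm N \<Longrightarrow> N 0 = 0"
  using isn_zero by blast

lemma isn_minus: "is_norm N \<Longrightarrow> N (- x) = N x"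
  using isn_scale[of N "-1" x] by simp

lemma isn_diff: "is_norm N \<Longrightarrow> N x - N y \<le> N (x - y)"
  using isn_tri[of N "x - y" y] by simp

lemma isn_sum: assumes "is_norm N" "finite S" shows "N (sum f S) \<le> (\<Sum>i\<in>S. N (f i))"
  using assms(2)
proof (induction S rule: finite_induct)
  case empty then show ?case by (simp add: isn_0[OF assms(1)])
next
  case (insert x F)
  then show ?case using isn_tri[OF assms(1), of "f x" "sum f F"] by simp
qed

lemma isn_upper:
  fixes N :: "'a::euclidean_space \<Rightarrow> real"
  assumes "is_norm N"
  shows "N x \<le> (\<Sum>b\<in>Basis. N b) * norm x"
proof -
  have "N x = N (\<Sum>b\<in>Basis. (x \<bullet> b) *\<^sub>R b)" by (simp add: euclidean_representation)
  also have "\<dots> \<le> (\<Sum>b\<in>Basis. N ((x \<bullet> b) *\<^sub>R b))" by (rule isn_sum[OF assms]) simp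
  also have "\<dots> = (\<Sum>b\<in>Basis. \<bar>x \<bullet> b\<bar> * N b)" by (simp add: isn_scale[OF assms])
  also have "\<dots> \<le> (\<Sum>b\<in>Basis. norm x * N b)"
    by (intro sum_mono mult_right_mono Basis_le_norm isn_nonneg[OF assms]) simp
  finally show ?thesis by (simp add: sum_distrib_left mult.commute)
qed

lemma isn_cont:
  fixes N :: "'a::euclidean_space \<Rightarrow> real"
  assumes "is_norm N"
  shows "continuous_on S N"
proof -
  let ?C = "(\<Sum>b\<in>Basis. N b)"
  have "?C-lipschitz_on S N"
  proof (rule lipschitz_onI)
    fix x y
    have "N x - N y \<le> ?C * norm (x - y)" using isn_diff[OF assms, of x y] isn_upper[OF assms, of "x - y"] by linarith
    moreover have "N y - N x \<le> ?C * norm (x - y)" using isn_diff[OF assms, of y x] isn_upper[OF assms, of "y - x"]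
      by (simp add: norm_minus_commute)
    ultimately show "dist (N x) (N y) \<le> ?C * dist x y" by (simp add: dist_norm dist_real_def abs_le_iff)
  next
    show "0 \<le> ?C" by (intro sum_nonneg isn_nonneg[OF assms])
  qed
  then show ?thesis by (rule lipschitz_on_continuous_on)
qed

lemma isn_lower:
  fixes N :: "'a::euclidean_space \<Rightarrow> real"
  assumes "is_norm N"
  shows "\<exists>k>0. \<forall>x. k * norm x \<le> N x"
proof -
  obtain b :: 'a where b: "b \<in> Basis" using nonempty_Basis by blast
  have ne: "sphere (0::'a) 1 \<noteq> {}" using b by (auto intro!: exI[of _ b])
  obtain x0 where x0: "x0 \<in> sphere 0 1" "\<forall>y\<in>sphere 0 1. N x0 \<le> N y"
    using continuous_attains_inf[OF compact_sphere ne isn_cont[OF assms]] by blast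
  have "x0 \<noteq> 0" using x0 by auto
  then have pos: "N x0 > 0" using isn_nonneg[OF assms, of x0] isn_zero[OF assms, of x0] by linarith
  have "N x0 * norm x \<le> N x" for x
  proof (cases "x = 0")
    case True then show ?thesis by (simp add: isn_0[OF assms])
  next
    case False
    then have "(inverse (norm x) *\<^sub>R x) \<in> sphere 0 1" by simp
    then have "N x0 \<le> N (inverse (norm x) *\<^sub>R x)" using x0 by blast
    also have "\<dots> = N x / norm x" using False by (simp add: isn_scale[OF assms] field_simps)
    finally show ?thesis using False by (simp add: field_simps)
  qed
  then show ?thesis using pos by blast
qed

lemma unit_ball_compact:
  fixes N :: "'a::euclidean_space \<Rightarrow> real"
  assumes "is_norm N"
  shows "compact (unit_ball N)"
proof -
  obtain k where k: "k > 0" "\<forall>x. k * norm x \<le> N x" using isn_lower[OF assms] by blast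
  have "closed (unit_ball N)" unfolding unit_ball_def
    by (intro closed_Collect_le isn_cont[OF assms] continuous_on_const)
  moreover have "unit_ball N \<subseteq> cball 0 (1/k)"
  proof
    fix x assume "x \<in> unit_ball N"
    then have "k * norm x \<le> 1" using k(2)[rule_format, of x] by (simp add: unit_ball_def)
    then show "x \<in> cball 0 (1/k)" using k(1) by (simp add: field_simps)
  qed
  then have "bounded (unit_ball N)" using bounded_cball bounded_subset by blast
  ultimately show ?thesis using compact_eq_bounded_closed by blast
qed

lemma unit_ball_convex:
  assumes "is_norm N"
  shows "convex (unit_ball N)"
  unfolding convex_def unit_ball_def
proof (clarsimp)
  fix x y and u v :: real
  assume "N x \<le> 1" "N y \<le> 1" "0 \<le> u" "0 \<le> v" "u + v = 1"
  then show "N (u *\<^sub>R x + v *\<^sub>R y) \<le> 1"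
    using isn_tri[OF assms, of "u *\<^sub>R x" "v *\<^sub>R y"] isn_scale[OF assms, of u x] isn_scale[OF assms, of v y]
    by (smt (verit) mult_left_le)
qed

lemma unit_ball_0: "is_norm N \<Longrightarrow> 0 \<in> unit_ball N"
  by (simp add: unit_ball_def isn_0)



lemma cont_mv[continuous_intros]:
  fixes A :: "'a::topological_space \<Rightarrow> real^'m^'n"
  assumes "continuous_on S A" "continuous_on S x"
  shows "continuous_on S (\<lambda>t. A t *v x t)"
  unfolding matrix_vector_mult_def
  by (intro continuous_intros assms)

lemma bl_mv: "bounded_linear (\<lambda>A::real^'m^'n. A *v y)"
proof -
  have "linear (\<lambda>A::real^'m^'n. A *v y)"
    by (rule linearI) (simp_all add: matrix_vector_mult_add_rdistrib vec_eq_iff matrix_vector_mult_def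
        sum_distrib_left mult.assoc distrib_right sum.distrib)
  then show ?thesis by (simp add: linear_conv_bounded_linear)
qed

lemma cont_fst_comp:
  assumes "continuous_on I F"
  shows "continuous_on (I \<times> T) (\<lambda>z. F (fst z))"
  by (rule continuous_on_compose2[OF assms continuous_on_fst[OF continuous_on_id]]) auto

lemma min_pre:
  fixes M :: "real^'p^'n"
  assumes Np: "is_norm Np" and x1: "M *v x1 = y"
  shows "\<exists>x0. M *v x0 = y \<and> (\<forall>x. M *v x = y \<longrightarrow> Np x0 \<le> Np x)"
proof -
  obtain k where k: "k > 0" "\<forall>x. k * norm x \<le> Np x" using isn_lower[OF Np] by blast
  let ?K = "{x. M *v x = y} \<inter> {x. Np x \<le> Np x1}"
  have "closed ?K"
    by (intro closed_Int closed_Collect_eq closed_Collect_le continuous_intros isn_cont[OF Np])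
  moreover have "?K \<subseteq> cball 0 (Np x1 / k)"
  proof
    fix x assume "x \<in> ?K"
    then have "k * norm x \<le> Np x1" using k(2)[rule_format, of x] by auto
    then show "x \<in> cball 0 (Np x1 / k)" using k(1) by (simp add: field_simps)
  qed
  then have "bounded ?K" using bounded_cball bounded_subset by blast
  ultimately have cK: "compact ?K" using compact_eq_bounded_closed by blast
  have neK: "?K \<noteq> {}" using x1 by auto
  obtain x0 where x0: "x0 \<in> ?K" "\<forall>x\<in>?K. Np x0 \<le> Np x"
    using continuous_attains_inf[OF cK neK isn_cont[OF Np]] by blast
  have "Np x0 \<le> Np x" if "M *v x = y" for x
  proof (cases "Np x \<le> Np x1")
    case True then show ?thesis using x0 that by auto
  next
    case False then show ?thesis using x0 by auto
  qed
  then show ?thesis using x0 by blast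
qed

lemma lower_norm_props:
  fixes M :: "real^'p^'n"
  assumes Np: "is_norm Np" and Nn: "is_norm Nn" and su: "surj ((*v) M)"
  shows "0 \<le> lower_norm Np Nn M" "\<exists>x. M *v x = y \<and> lower_norm Np Nn M * Np x \<le> Nn y"
proof -
  define S where "S = {\<mu>. \<forall>y \<in> range (\<lambda>x. M *v x). \<exists>x. M *v x = y \<and> \<mu> * Np x \<le> Nn y}"
  have LS: "lower_norm Np Nn M = Sup S" unfolding S_def lower_norm_def ..
  have pre: "\<exists>x. M *v x = z" for z using su by (metis surjD)
  have "0 \<in> S" unfolding S_def using isn_nonneg[OF Nn] by auto
  then have Sne: "S \<noteq> {}" by blast
  define y0 :: "real^'n" where "y0 = axis undefined 1"
  have y0: "y0 \<noteq> 0" unfolding y0_def by (simp add: axis_eq_0_iff)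
  obtain x0 where x0: "M *v x0 = y0" "\<forall>x. M *v x = y0 \<longrightarrow> Np x0 \<le> Np x"
    using min_pre[OF Np] pre by metis
  have "x0 \<noteq> 0" using x0 y0 by auto
  then have d: "Np x0 > 0" using isn_nonneg[OF Np, of x0] isn_zero[OF Np, of x0] by linarith
  have "\<mu> \<le> Nn y0 / Np x0" if "\<mu> \<in> S" for \<mu>
  proof (cases "\<mu> \<le> 0")
    case True then show ?thesis using d isn_nonneg[OF Nn, of y0] by (smt (verit) divide_nonneg_pos)
  next
    case False
    obtain x' where "M *v x' = y0" using pre by blast
    then have "y0 \<in> range (\<lambda>x. M *v x)" by blast
    with that obtain x where x: "M *v x = y0" "\<mu> * Np x \<le> Nn y0" unfolding S_def by blast
    have "\<mu> * Np x0 \<le> \<mu> * Np x" using False x0 x by (intro mult_left_mono) auto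
    then have "\<mu> * Np x0 \<le> Nn y0" using x by linarith
    then show ?thesis using d by (simp add: field_simps)
  qed
  then have bdd: "bdd_above S" by (rule bdd_aboveI)
  show "0 \<le> lower_norm Np Nn M" unfolding LS using cSup_upper[OF \<open>0 \<in> S\<close> bdd] .
  obtain x1 where x1: "M *v x1 = y" "\<forall>x. M *v x = y \<longrightarrow> Np x1 \<le> Np x"
    using min_pre[OF Np] pre by metis
  show "\<exists>x. M *v x = y \<and> lower_norm Np Nn M * Np x \<le> Nn y"
  proof (cases "Np x1 = 0")
    case True then show ?thesis using x1 isn_nonneg[OF Nn, of y] by auto
  next
    case False
    then have d1: "Np x1 > 0" using isn_nonneg[OF Np, of x1] by linarith
    have "\<mu> \<le> Nn y / Np x1" if "\<mu> \<in> S" for \<mu>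
    proof (cases "\<mu> \<le> 0")
      case True then show ?thesis using d1 isn_nonneg[OF Nn, of y] by (smt (verit) divide_nonneg_pos)
    next
      case False
      obtain x' where "M *v x' = y" using pre by blast
      then have "y \<in> range (\<lambda>x. M *v x)" by blast
      with that obtain x where x: "M *v x = y" "\<mu> * Np x \<le> Nn y" unfolding S_def by blast
      have "\<mu> * Np x1 \<le> \<mu> * Np x" using False x1 x by (intro mult_left_mono) auto
      then have "\<mu> * Np x1 \<le> Nn y" using x by linarith
      then show ?thesis using d1 by (simp add: field_simps)
    qed
    then have "Sup S \<le> Nn y / Np x1" using Sne by (intro cSup_least) auto
    then show ?thesis using x1 d1 unfolding LS by (intro exI[of _ x1]) (simp add: field_simps)
  qed
qed

lemma op_norm_bound:
  fixes D :: "real^'p^'n"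
  assumes Np: "is_norm Np" and Nn: "is_norm Nn" and u: "Np u \<le> 1"
  shows "Nn (D *v u) \<le> op_norm Np Nn D"
proof -
  have eq: "{Nn (D *v x) | x. Np x \<le> 1} = (\<lambda>x. Nn (D *v x)) ` unit_ball Np"
    unfolding unit_ball_def by auto
  have "compact ((\<lambda>x. Nn (D *v x)) ` unit_ball Np)"
    by (intro compact_continuous_image unit_ball_compact[OF Np]
        continuous_on_compose2[OF isn_cont[OF Nn], of _ "\<lambda>x. D *v x"] continuous_intros) auto
  then have "bdd_above {Nn (D *v x) | x. Np x \<le> 1}"
    unfolding eq by (intro bounded_imp_bdd_above compact_imp_bounded)
  then show ?thesis unfolding op_norm_def using u by (intro cSup_upper) auto
qed

lemma op_norm_le:
  fixes D :: "real^'p^'n"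
  assumes "\<And>x. Np x \<le> 1 \<Longrightarrow> Nn (D *v x) \<le> B" "is_norm Np"
  shows "op_norm Np Nn D \<le> B"
proof -
  have "Np 0 \<le> 1" using isn_0[OF assms(2)] by simp
  then show ?thesis unfolding op_norm_def using assms by (intro cSup_least) blast+
qed



lemma mid_norm:
  fixes w1 w2 :: "'a::real_inner"
  shows "4 * (norm ((1/2) *\<^sub>R (w1 + w2)))^2 = 2 * (norm w1)^2 + 2 * (norm w2)^2 - (norm (w1 - w2))^2"
  by (simp add: power2_norm_eq_inner inner_add_left inner_add_right inner_diff_left inner_diff_right
      inner_commute algebra_simps)

lemma mid_in: "convex S \<Longrightarrow> x \<in> S \<Longrightarrow> y \<in> S \<Longrightarrow> (1/2) *\<^sub>R (x + y) \<in> S"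
  using convexD[of S x y "1/2" "1/2"] by (simp add: scaleR_add_right)

lemma selection:
  fixes F :: "real \<Rightarrow> real^'m^'n" and bv :: "real \<Rightarrow> real^'n" and K :: "(real^'m) set"
  assumes I: "closed I" and cF: "continuous_on I F" and cb: "continuous_on I bv"
    and K: "compact K" "convex K"
    and ex: "\<forall>s\<in>I. \<exists>w\<in>K. F s *v w = bv s"
  shows "\<exists>w. w \<in> borel_measurable (lebesgue_on I) \<and> (\<forall>s\<in>I. w s \<in> K \<and> F s *v w s = bv s)"
proof -
  define f where "f k s w = real k * norm (F s *v w - bv s) + (norm w)^2" for k :: nat and s w
  have fmid: "4 * f k s ((1/2) *\<^sub>R (w1 + w2)) \<le> 2 * f k s w1 + 2 * f k s w2 - (norm (w1 - w2))^2" for k s w1 w2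
  proof -
    have e1: "F s *v ((1/2) *\<^sub>R (w1 + w2)) = (1/2) *\<^sub>R (F s *v w1) + (1/2) *\<^sub>R (F s *v w2)"
      by (simp add: matrix_vector_mult_scaleR matrix_vector_right_distrib scaleR_add_right)
    have e2: "bv s = (1/2) *\<^sub>R bv s + (1/2) *\<^sub>R bv s" by (simp flip: scaleR_add_left)
    have "F s *v ((1/2) *\<^sub>R (w1 + w2)) - bv s = (1/2) *\<^sub>R ((F s *v w1 - bv s) + (F s *v w2 - bv s))"
      apply (subst e1) apply (subst (1) e2) by (simp add: algebra_simps)
    then have "norm (F s *v ((1/2) *\<^sub>R (w1 + w2)) - bv s) \<le> (norm (F s *v w1 - bv s) + norm (F s *v w2 - bv s))/2"
      using norm_triangle_ineq[of "F s *v w1 - bv s" "F s *v w2 - bv s"] by simp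
    then have "real k * norm (F s *v ((1/2) *\<^sub>R (w1 + w2)) - bv s) \<le> real k * ((norm (F s *v w1 - bv s) + norm (F s *v w2 - bv s))/2)"
      by (intro mult_left_mono) auto
    then show ?thesis unfolding f_def using mid_norm[of w1 w2] by (simp add: field_simps)
  qed
  have Kne: "K \<noteq> {}" if "s \<in> I" for s using ex that by blast
  have contf: "continuous_on K (f k s)" for k s unfolding f_def by (intro continuous_intros)
  have ex1: "\<exists>!w. w \<in> K \<and> (\<forall>w'\<in>K. f k s w \<le> f k s w')" if s: "s \<in> I" for k s
  proof -
    obtain w where w: "w \<in> K" "\<forall>w'\<in>K. f k s w \<le> f k s w'"
      using continuous_attains_inf[OF K(1) Kne[OF s] contf] by blast
    moreover have "w2 = w" if "w2 \<in> K" "\<forall>w'\<in>K. f k s w2 \<le> f k s w'" for w2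
    proof -
      have m: "(1/2) *\<^sub>R (w + w2) \<in> K" using mid_in[OF K(2) w(1) that(1)] .
      have "f k s w \<le> f k s ((1/2) *\<^sub>R (w + w2))" using w m by blast
      moreover have "f k s w2 \<le> f k s w" "f k s w \<le> f k s w2" using w that by auto
      ultimately have "(norm (w - w2))^2 \<le> 0" using fmid[of k s w w2] by linarith
      then show ?thesis by simp
    qed
    ultimately show ?thesis by blast
  qed
  define vk where "vk k s = (THE w. w \<in> K \<and> (\<forall>w'\<in>K. f k s w \<le> f k s w'))" for k s
  have vk: "vk k s \<in> K \<and> (\<forall>w'\<in>K. f k s (vk k s) \<le> f k s w')" if "s \<in> I" for k s
    unfolding vk_def using theI'[OF ex1[OF that]] .
  have vk_uniq: "vk k s = w" if "s \<in> I" "w \<in> K" "\<forall>w'\<in>K. f k s w \<le> f k s w'" for k s w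
    unfolding vk_def using the1_equality[OF ex1[OF that(1)]] that by blast
  have cvk: "continuous_on I (vk k)" for k
  proof (rule continuous_from_closed_graph[OF K(1)])
    show "vk k \<in> I \<rightarrow> K" using vk by blast
    define C where "C w' = (I \<times> UNIV) \<inter> (\<lambda>z. f k (fst z) (snd z) - f k (fst z) w') -` {..0}" for w'
    have cC: "closed (C w')" for w'
      unfolding C_def f_def
      by (intro continuous_closed_preimage closed_Times I closed_UNIV closed_atMost continuous_intros
          cont_fst_comp cF cb continuous_on_snd continuous_on_id)
    have "(\<lambda>x. (x, vk k x)) ` I = (I \<times> K) \<inter> \<Inter> (C ` K)"
    proof
      show "(\<lambda>x. (x, vk k x)) ` I \<subseteq> (I \<times> K) \<inter> \<Inter> (C ` K)"
        using vk by (auto simp: C_def)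
      show "(I \<times> K) \<inter> \<Inter> (C ` K) \<subseteq> (\<lambda>x. (x, vk k x)) ` I"
      proof clarify
        fix s w assume "s \<in> I" "w \<in> K" "(s, w) \<in> \<Inter> (C ` K)"
        then have "\<forall>w'\<in>K. f k s w \<le> f k s w'"
        proof (intro ballI)
          fix w' assume "w' \<in> K"
          then have "(s, w) \<in> C w'" using \<open>(s, w) \<in> \<Inter> (C ` K)\<close> by blast
          then show "f k s w \<le> f k s w'" unfolding C_def by simp
        qed
        then have "vk k s = w" using vk_uniq \<open>s \<in> I\<close> \<open>w \<in> K\<close> by blast
        then show "(s, w) \<in> (\<lambda>x. (x, vk k x)) ` I" using \<open>s \<in> I\<close> by force
      qed
    qed
    moreover have "closed ((I \<times> K) \<inter> \<Inter> (C ` K))"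
      using cC closed_Times[OF I compact_imp_closed[OF K(1)]] by (intro closed_Int closed_Inter) auto
    ultimately show "closed ((\<lambda>x. (x, vk k x)) ` I)" by simp
  qed
  define W where "W s = {w \<in> K. F s *v w = bv s}" for s
  have Wconv: "convex (W s)" for s
  proof -
    have "convex {w. F s *v w = bv s}"
    proof (rule convexI)
      fix x y :: "real^'m" and u v :: real
      assume "x \<in> {w. F s *v w = bv s}" "y \<in> {w. F s *v w = bv s}" "u + v = 1"
      then have "F s *v (u *\<^sub>R x + v *\<^sub>R y) = u *\<^sub>R bv s + v *\<^sub>R bv s"
        by (simp add: matrix_vector_right_distrib matrix_vector_mult_scaleR)
      also have "\<dots> = bv s" using \<open>u + v = 1\<close> by (metis scaleR_add_left scaleR_one)
      finally show "u *\<^sub>R x + v *\<^sub>R y \<in> {w. F s *v w = bv s}" by simp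
    qed
    moreover have "W s = K \<inter> {w. F s *v w = bv s}" unfolding W_def by auto
    ultimately show ?thesis using K(2) convex_Int by auto
  qed
  have Wcomp: "compact (W s)" for s
  proof -
    have "W s = K \<inter> {w. F s *v w = bv s}" unfolding W_def by auto
    moreover have "closed {w. F s *v w = bv s}" by (intro closed_Collect_eq continuous_intros)
    ultimately show ?thesis using K(1) compact_Int_closed by auto
  qed
  have ex2: "\<exists>!w. w \<in> W s \<and> (\<forall>w'\<in>W s. norm w \<le> norm w')" if s: "s \<in> I" for s
  proof -
    have "W s \<noteq> {}" using ex s unfolding W_def by auto
    then obtain w where w: "w \<in> W s" "\<forall>w'\<in>W s. norm w \<le> norm w'"
      using continuous_attains_inf[OF Wcomp _ continuous_on_norm_id] by blast
    moreover have "w2 = w" if "w2 \<in> W s" "\<forall>w'\<in>W s. norm w2 \<le> norm w'" for w2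
    proof -
      have "(1/2) *\<^sub>R (w + w2) \<in> W s" using mid_in[OF Wconv w(1) that(1)] .
      then have "norm w \<le> norm ((1/2) *\<^sub>R (w + w2))" using w by blast
      moreover have "norm w2 = norm w" using w that by (meson order_antisym)
      ultimately have "(norm w)^2 \<le> (norm ((1/2) *\<^sub>R (w + w2)))^2" by (simp add: power_mono)
      moreover have "(norm w2)^2 = (norm w)^2" using \<open>norm w2 = norm w\<close> by simp
      ultimately have "(norm (w - w2))^2 \<le> 0" using mid_norm[of w w2] by linarith
      then show ?thesis by simp
    qed
    ultimately show ?thesis by blast
  qed
  define ws where "ws s = (THE w. w \<in> W s \<and> (\<forall>w'\<in>W s. norm w \<le> norm w'))" for s
  have ws: "ws s \<in> W s \<and> (\<forall>w'\<in>W s. norm (ws s) \<le> norm w')" if "s \<in> I" for s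
    unfolding ws_def using theI'[OF ex2[OF that]] .
  have ws_uniq: "w = ws s" if s: "s \<in> I" and w: "w \<in> W s" "norm w \<le> norm (ws s)" for s w
  proof -
    have "(1/2) *\<^sub>R (w + ws s) \<in> W s" using mid_in[OF Wconv w(1)] ws[OF s] by blast
    then have "norm (ws s) \<le> norm ((1/2) *\<^sub>R (w + ws s))" using ws[OF s] by blast
    then have "(norm (ws s))^2 \<le> (norm ((1/2) *\<^sub>R (w + ws s)))^2" by (simp add: power_mono)
    moreover have "(norm w)^2 \<le> (norm (ws s))^2" using w(2) by (simp add: power_mono)
    ultimately have "(norm (w - ws s))^2 \<le> 0" using mid_norm[of w "ws s"] by linarith
    then show ?thesis by simp
  qed
  have lim: "(\<lambda>k. vk k s) \<longlonglongrightarrow> ws s" if s: "s \<in> I" for s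
  proof -
    define R where "R = norm (ws s)"
    have wsW: "ws s \<in> K" "F s *v ws s = bv s" using ws[OF s] unfolding W_def by auto
    have fk: "f k s (vk k s) \<le> R^2" for k
      using vk[OF s] wsW unfolding R_def by (metis add_0 diff_self f_def mult_zero_right norm_zero)
    have nk: "norm (vk k s) \<le> R" for k
    proof -
      have "(norm (vk k s))^2 \<le> R^2" using fk[of k] unfolding f_def
        by (smt (verit) mult_nonneg_nonneg norm_ge_zero of_nat_0_le_iff)
      then show ?thesis unfolding R_def by (meson norm_ge_zero power2_le_imp_le)
    qed
    have rk: "real k * norm (F s *v vk k s - bv s) \<le> R^2" for k
      using fk[of k] unfolding f_def by (smt (verit) zero_le_power2)
    show ?thesis
    proof (rule LIMSEQ_I)
      fix e :: real assume e: "e > 0"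
      define Ke where "Ke = K \<inter> cball 0 R \<inter> {w. e \<le> dist w (ws s)}"
      show "\<exists>no. \<forall>n\<ge>no. norm (vk n s - ws s) < e"
      proof (cases "Ke = {}")
        case True
        have "norm (vk n s - ws s) < e" for n
        proof (rule ccontr)
          assume "\<not> ?thesis"
          then have "vk n s \<in> Ke" using vk[OF s] nk[of n] unfolding Ke_def by (auto simp: dist_norm)
          then show False using True by blast
        qed
        then show ?thesis by blast
      next
        case False
        have cKe: "compact Ke" unfolding Ke_def
          by (intro compact_Int_closed closed_Collect_le continuous_intros K(1) compact_Int_closed[OF K(1)] closed_cball)
        obtain wb where wb: "wb \<in> Ke" "\<forall>w\<in>Ke. norm (F s *v wb - bv s) \<le> norm (F s *v w - bv s)"
        proof -
          have "continuous_on Ke (\<lambda>w. norm (F s *v w - bv s))" by (intro continuous_intros)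
          then show ?thesis using that continuous_attains_inf[OF cKe False] by blast
        qed
        define phi where "phi = norm (F s *v wb - bv s)"
        have phi: "phi > 0"
        proof (rule ccontr)
          assume "\<not> phi > 0"
          then have "F s *v wb = bv s" unfolding phi_def by simp
          then have "wb \<in> W s" "norm wb \<le> norm (ws s)" using wb unfolding Ke_def W_def R_def by auto
          then have "wb = ws s" using ws_uniq[OF s] by blast
          then show False using wb e unfolding Ke_def by auto
        qed
        obtain N :: nat where N: "R^2 / phi < real N" using reals_Archimedean2 by blast
        have "norm (vk n s - ws s) < e" if n: "n \<ge> N" for n
        proof (rule ccontr)
          assume "\<not> ?thesis"
          then have "vk n s \<in> Ke" using vk[OF s] nk[of n] unfolding Ke_def by (auto simp: dist_norm)
          then have "phi \<le> norm (F s *v vk n s - bv s)" using wb unfolding phi_def by blast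
          then have "real n * phi \<le> R^2" using rk[of n] by (smt (verit) mult_left_mono of_nat_0_le_iff)
          moreover have "R^2 < real n * phi" using N n phi
            by (smt (verit) le_divide_eq mult.commute mult_right_mono of_nat_mono)
          ultimately show False by linarith
        qed
        then show ?thesis by blast
      qed
    qed
  qed
  have Ileb: "I \<in> sets lebesgue" using I by (simp add: borel_closed)
  have "ws \<in> borel_measurable (lebesgue_on I)"
  proof (rule borel_measurable_LIMSEQ_metric[of vk])
    show "vk i \<in> borel_measurable (lebesgue_on I)" for i
      by (rule continuous_imp_measurable_on_sets_lebesgue[OF cvk Ileb])
    show "(\<lambda>i. vk i x) \<longlonglongrightarrow> ws x" if "x \<in> space (lebesgue_on I)" for x
      using lim that by simp
  qed
  moreover have "\<forall>s\<in>I. ws s \<in> K \<and> F s *v ws s = bv s" using ws unfolding W_def by blast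
  ultimately show ?thesis by blast
qed



theorem lemma8:
  fixes a b :: real
    and P Pt :: "real \<Rightarrow> real^'m^'n"
    and c :: "real^'m" and G :: "real^'p^'m"
    and Nn :: "real^'n \<Rightarrow> real" and Nm :: "real^'m \<Rightarrow> real" and Np :: "real^'p \<Rightarrow> real"
    and \<alpha> :: real
  assumes "is_norm Nn" "is_norm Nm" "is_norm Np"
    and "a \<le> b"
    and "continuous_on {a..b} P" "continuous_on {a..b} Pt"
    and "\<forall>s\<in>{a..b}. rank (P s) = CARD('n)"
    and "rank G = CARD('m)"
    and "(SUP s\<in>{a..b}. Nn ((Pt s - P s) *v c)) \<le> (INF s\<in>{a..b}. lower_norm Np Nn (P s ** G))"
    and "0 \<le> \<alpha>"
    and "\<alpha> \<le> ((INF s\<in>{a..b}. lower_norm Np Nn (P s ** G)) - (SUP s\<in>{a..b}. Nn ((Pt s - P s) *v c)))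
              / ((INF s\<in>{a..b}. lower_norm Np Nn (P s ** G)) + (SUP s\<in>{a..b}. op_norm Np Nn ((Pt s - P s) ** G)))"
  shows "(\<lambda>x. integral {a..b} Pt *v x) ` {c + \<alpha> *\<^sub>R (G *v u) | u. u \<in> unit_ball Np}
           \<subseteq> set_integral_mat {a..b} P {c + G *v u | u. u \<in> unit_ball Np}"
proof -
  note Nn = assms(1) and Np = assms(3) and cP = assms(5) and cPt = assms(6)
  define I where "I = {a..b}"
  define Lf where "Lf s = lower_norm Np Nn (P s ** G)" for s
  define sc where "sc s = Nn ((Pt s - P s) *v c)" for s
  define sg where "sg s = op_norm Np Nn ((Pt s - P s) ** G)" for s
  define L where "L = (INF s\<in>I. Lf s)"
  define \<sigma>c where "\<sigma>c = (SUP s\<in>I. sc s)"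
  define \<sigma>G where "\<sigma>G = (SUP s\<in>I. sg s)"
  have hyp: "\<sigma>c \<le> L" using assms(9) unfolding \<sigma>c_def L_def sc_def Lf_def I_def .
  have al: "\<alpha> \<le> (L - \<sigma>c) / (L + \<sigma>G)" using assms(11) unfolding \<sigma>c_def L_def sc_def Lf_def I_def \<sigma>G_def sg_def .
  have Ine: "I \<noteq> {}" unfolding I_def using assms(4) by simp
  have cI: "compact I" unfolding I_def by simp
  have cP': "continuous_on I P" and cPt': "continuous_on I Pt" unfolding I_def using cP cPt by auto
  have surjG: "surj ((*v) G)" using assms(8) full_rank_surjective by blast
  have surjPG: "surj ((*v) (P s ** G))" if "s \<in> I" for s
  proof -
    have sP: "surj ((*v) (P s))" using assms(7) that full_rank_surjective unfolding I_def by blast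
    show ?thesis
    proof (rule surjI)
      fix y
      obtain x where x: "P s *v x = y" using sP by (metis surjD)
      obtain z where z: "G *v z = x" using surjG by (metis surjD)
      show "(P s ** G) *v (SOME z. (P s ** G) *v z = y) = y"
        by (rule someI[of _ z]) (simp add: x z flip: matrix_vector_mul_assoc)
    qed
  qed
  have Lf0: "0 \<le> Lf s" if "s \<in> I" for s
    unfolding Lf_def using lower_norm_props(1)[OF Np Nn surjPG[OF that]] .
  have bddL: "bdd_below (Lf ` I)" using Lf0 by (intro bdd_belowI) auto
  have bddc: "bdd_above (sc ` I)"
  proof -
    have "continuous_on I sc" unfolding sc_def
      by (intro continuous_on_compose2[OF isn_cont[OF Nn], of _ "\<lambda>s. (Pt s - P s) *v c"] continuous_intros cP' cPt') auto
    then show ?thesis by (intro bounded_imp_bdd_above compact_imp_bounded compact_continuous_image cI)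
  qed
  have bddg: "bdd_above (sg ` I)"
  proof -
    define h where "h z = Nn ((Pt (fst z) - P (fst z)) *v (G *v snd z))" for z
    have "continuous_on (I \<times> unit_ball Np) h" unfolding h_def
      by (intro continuous_on_compose2[OF isn_cont[OF Nn], of _ "\<lambda>z. (Pt (fst z) - P (fst z)) *v (G *v snd z)"]
          continuous_intros cont_fst_comp cP' cPt' continuous_on_snd continuous_on_id) auto
    then have "compact (h ` (I \<times> unit_ball Np))"
      by (intro compact_continuous_image compact_Times cI unit_ball_compact[OF Np])
    then obtain B where B: "\<forall>z\<in>I \<times> unit_ball Np. h z \<le> B"
      using compact_imp_bounded bounded_imp_bdd_above unfolding bdd_above_def by (metis imageI)
    have "sg s \<le> B" if "s \<in> I" for s
      unfolding sg_def
    proof (rule op_norm_le[OF _ Np])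
      fix x assume "Np x \<le> 1"
      then have "h (s, x) \<le> B" using B that by (auto simp: unit_ball_def)
      then show "Nn (((Pt s - P s) ** G) *v x) \<le> B" unfolding h_def by (simp flip: matrix_vector_mul_assoc)
    qed
    then show ?thesis by (intro bdd_aboveI) auto
  qed
  define \<Omega> where "\<Omega> = (\<lambda>u. c + G *v u) ` unit_ball Np"
  have \<Omega>eq: "{c + G *v u | u. u \<in> unit_ball Np} = \<Omega>" unfolding \<Omega>_def by auto
  have \<Omega>comp: "compact \<Omega>" unfolding \<Omega>_def
    by (intro compact_continuous_image unit_ball_compact[OF Np] continuous_intros)
  have "\<Omega> = (+) c ` ((*v) G ` unit_ball Np)" unfolding \<Omega>_def by auto
  then have \<Omega>conv: "convex \<Omega>"
    using convex_translation convex_linear_image[OF matrix_vector_mul_linear unit_ball_convex[OF Np]] by metis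
  have point: "\<exists>w\<in>\<Omega>. P s *v w = Pt s *v (c + \<alpha> *\<^sub>R (G *v u))" if s: "s \<in> I" and u: "u \<in> unit_ball Np" for s u
  proof -
    define Pd where "Pd = Pt s - P s"
    define y where "y = c + \<alpha> *\<^sub>R (G *v u)"
    have Lle: "L \<le> Lf s" unfolding L_def using bddL s by (rule cINF_lower)
    have scle: "sc s \<le> \<sigma>c" unfolding \<sigma>c_def using s bddc by (rule cSUP_upper)
    have sgle: "sg s \<le> \<sigma>G" unfolding \<sigma>G_def using s bddg by (rule cSUP_upper)
    have sc0: "0 \<le> \<sigma>c" using scle isn_nonneg[OF Nn] unfolding sc_def by (smt (verit))
    have "Nn (((Pt s - P s) ** G) *v 0) \<le> sg s" unfolding sg_def by (rule op_norm_bound[OF Np Nn]) (simp add: isn_0[OF Np])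
    then have sG0: "0 \<le> \<sigma>G" using sgle by (simp add: isn_0[OF Nn])
    have Np_u: "Np u \<le> 1" using u by (simp add: unit_ball_def)
    show ?thesis
    proof (cases "L = 0")
      case True
      then have "\<sigma>c = 0" using hyp sc0 by simp
      then have "\<alpha> = 0" using al True assms(10) by simp
      have "Nn (Pd *v c) = 0" using scle sc0 \<open>\<sigma>c = 0\<close> isn_nonneg[OF Nn] unfolding sc_def Pd_def by (smt (verit))
      then have "Pd *v c = 0" using isn_zero[OF Nn] by blast
      then have "Pt s *v c = P s *v c" unfolding Pd_def by (simp add: matrix_vector_mult_diff_rdistrib)
      moreover have "c \<in> \<Omega>" unfolding \<Omega>_def using unit_ball_0[OF Np] by force
      ultimately show ?thesis using \<open>\<alpha> = 0\<close> by auto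
    next
      case False
      then have Lpos: "L > 0" using hyp sc0 by simp
      obtain v where v: "(P s ** G) *v v = Pd *v y" "Lf s * Np v \<le> Nn (Pd *v y)"
        using lower_norm_props(2)[OF Np Nn surjPG[OF s]] unfolding Lf_def by blast
      have Pdy: "Pd *v y = Pd *v c + \<alpha> *\<^sub>R ((Pd ** G) *v u)"
        unfolding y_def by (simp add: matrix_vector_right_distrib matrix_vector_mult_scaleR flip: matrix_vector_mul_assoc)
      have "Nn ((Pd ** G) *v u) \<le> sg s" unfolding sg_def Pd_def by (rule op_norm_bound[OF Np Nn Np_u])
      then have g1: "Nn ((Pd ** G) *v u) \<le> \<sigma>G" using sgle by simp
      have "Nn (Pd *v y) \<le> Nn (Pd *v c) + \<alpha> * Nn ((Pd ** G) *v u)"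
        unfolding Pdy using isn_tri[OF Nn] isn_scale[OF Nn] assms(10) by (metis abs_of_nonneg)
      also have "\<dots> \<le> \<sigma>c + \<alpha> * \<sigma>G"
        using scle g1 assms(10) unfolding sc_def Pd_def by (smt (verit) mult_left_mono)
      finally have Ny: "Nn (Pd *v y) \<le> \<sigma>c + \<alpha> * \<sigma>G" .
      have "L * Np v \<le> Lf s * Np v" using Lle isn_nonneg[OF Np] by (rule mult_right_mono)
      then have Lv: "L * Np v \<le> \<sigma>c + \<alpha> * \<sigma>G" using v(2) Ny by linarith
      have "\<alpha> * (L + \<sigma>G) \<le> L - \<sigma>c" using al Lpos sG0 by (simp add: le_divide_eq)
      define u' where "u' = \<alpha> *\<^sub>R u + v"
      have "Np u' \<le> \<alpha> * Np u + Np v"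
        unfolding u'_def using isn_tri[OF Np] isn_scale[OF Np] assms(10) by (metis abs_of_nonneg)
      also have "\<dots> \<le> \<alpha> + Np v" using Np_u assms(10) by (simp add: mult_left_le)
      finally have "L * Np u' \<le> L * (\<alpha> + Np v)" using Lpos by simp
      also have "\<dots> \<le> L" using Lv \<open>\<alpha> * (L + \<sigma>G) \<le> L - \<sigma>c\<close> by (simp add: algebra_simps)
      finally have "Np u' \<le> 1" using Lpos by simp
      then have "c + G *v u' \<in> \<Omega>" unfolding \<Omega>_def unit_ball_def by blast
      moreover have "P s *v (c + G *v u') = Pt s *v y"
      proof -
        have "Pt s = P s + Pd" unfolding Pd_def by simp
        then have "Pt s *v y = P s *v y + Pd *v y" by (simp add: matrix_vector_mult_add_rdistrib)
        also have "\<dots> = P s *v c + \<alpha> *\<^sub>R (P s *v (G *v u)) + (P s ** G) *v v"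
          using v(1) unfolding y_def by (simp add: matrix_vector_right_distrib matrix_vector_mult_scaleR)
        also have "\<dots> = P s *v (c + G *v u')"
          unfolding u'_def by (simp add: matrix_vector_right_distrib matrix_vector_mult_scaleR matrix_vector_mul_assoc add.assoc)
        finally show ?thesis by simp
      qed
      ultimately show ?thesis unfolding y_def by blast
    qed
  qed
  show ?thesis
  proof
    fix x assume "x \<in> (\<lambda>x. integral {a..b} Pt *v x) ` {c + \<alpha> *\<^sub>R (G *v u) | u. u \<in> unit_ball Np}"
    then obtain u where u: "u \<in> unit_ball Np" and x: "x = integral I Pt *v (c + \<alpha> *\<^sub>R (G *v u))"
      unfolding I_def by blast
    define y where "y = c + \<alpha> *\<^sub>R (G *v u)"
    have ex: "\<forall>s\<in>I. \<exists>w\<in>\<Omega>. P s *v w = Pt s *v y" using point u unfolding y_def by blast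
    have cb: "continuous_on I (\<lambda>s. Pt s *v y)" by (intro continuous_intros cPt')
    obtain w where w: "w \<in> borel_measurable (lebesgue_on I)" "\<forall>s\<in>I. w s \<in> \<Omega> \<and> P s *v w s = Pt s *v y"
      using selection[OF _ cP' cb \<Omega>comp \<Omega>conv ex] unfolding I_def by auto
    have "integral I (\<lambda>s. P s *v w s) = integral I (\<lambda>s. Pt s *v y)"
      using w(2) by (intro integral_cong) auto
    also have "\<dots> = integral I Pt *v y"
      using integral_linear[OF integrable_continuous_interval[OF cPt] bl_mv[of y]] unfolding I_def by (simp add: o_def)
    finally have "x = integral I (\<lambda>s. P s *v w s)" unfolding x y_def by simp
    then show "x \<in> set_integral_mat {a..b} P {c + G *v u | u. u \<in> unit_ball Np}"
      unfolding set_integral_mat_def \<Omega>eq using w unfolding I_def by blast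
  qed
qed


end
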